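(* For every $1\le q\le\infty$, the pair $(\ell_2^2(\mathbb{R}),\ell_q^2(\mathbb{R}))$ fails the uniform sBPBp.
   Context: $\ell_p^2(\mathbb{R})$ denotes $\mathbb{R}^2$ with the norm $\|(x,y)\|_p=(|x|^p+|y|^p)^{1/p}$ for $p<\infty$ and $\|(x,y)\|_\infty=\max\{|x|,|y|\}$; $S_X$ is the unit sphere of $X$ and $\mathcal{L}(X,Y)$ the bounded linear operators. A pair of Banach spaces $(X,Y)$ has the uniform strong Bishop–Phelps–Bollobás property (uniform sBPBp) if for every $\varepsilon>0$ there exists $\eta(\varepsilon)>0$ such that whenever $T\in\mathcal{L}(X,Y)$ with $\|T\|=1$ and $x_0\in S_X$ satisfy $\|T(x_0)\|>1-\eta(\varepsilon)$, there exists $x_1\in S_X$ with $\|T(x_1)\|=1$ and $\|x_1-x_0\|<\varepsilon$. *)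

theory Defs
  imports "HOL-Analysis.Analysis"
begin

definition lp_norm :: "ereal \<Rightarrow> real \<times> real \<Rightarrow> real" where
  "lp_norm p v = (if p = \<infinity> then max \<bar>fst v\<bar> \<bar>snd v\<bar>
     else (\<bar>fst v\<bar> powr real_of_ereal p + \<bar>snd v\<bar> powr real_of_ereal p) powr (1 / real_of_ereal p))"

definition op_norm :: "ereal \<Rightarrow> ereal \<Rightarrow> (real \<times> real \<Rightarrow> real \<times> real) \<Rightarrow> real" where
  "op_norm p q T = (SUP x\<in>{x. lp_norm p x = 1}. lp_norm q (T x))"

text \<open>Uniform strong Bishop--Phelps--Bollob\'as property for the pair \<open>(\<ell>_p^2, \<ell>_q^2)\<close>.
  All linear maps between finite-dimensional spaces are bounded.\<close>
definition uniform_sBPBp :: "ereal \<Rightarrow> ereal \<Rightarrow> bool" where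
  "uniform_sBPBp p q \<longleftrightarrow>
     (\<forall>\<epsilon>>0. \<exists>\<eta>>0. \<forall>T x0. linear T \<and> op_norm p q T = 1 \<and> lp_norm p x0 = 1
        \<and> lp_norm q (T x0) > 1 - \<eta> \<longrightarrow>
        (\<exists>x1. lp_norm p x1 = 1 \<and> lp_norm q (T x1) = 1 \<and> lp_norm p (x1 - x0) < \<epsilon>))"

end

theory Submission imports Defs begin
lemma abs_powr2: "\<bar>a::real\<bar> powr 2 = a^2"
  by (cases "a = 0") (simp_all add: powr_numeral)
lemma lp2: "lp_norm 2 v = sqrt ((fst v)^2 + (snd v)^2)"
  unfolding lp_norm_def by (simp add: abs_powr2 powr_half_sqrt[symmetric])
lemma young1: fixes a s :: real assumes "0 \<le> a" "0 \<le> s" "s \<le> 1" shows "a powr s \<le> s*a + (1-s)"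
proof (cases "a = 0")
  case True thus ?thesis using assms by simp
next
  case False
  have "a powr s * 1 powr (1-s) \<le> s*a + (1-s)*1"
    by (rule Youngs_inequality_0) (use assms False in auto)
  thus ?thesis by simp
qed
lemma powmean: fixes A B s :: real assumes "0 \<le> A" "0 \<le> B" "0 \<le> s" "s \<le> 1"
  shows "A powr s + B powr s \<le> 2 * ((A+B)/2) powr s"
proof (cases "A + B = 0")
  case True hence "A = 0" "B = 0" using assms by auto
  thus ?thesis using assms by simp
next
  case False
  define M where "M = (A+B)/2"
  have M: "M > 0" using False assms unfolding M_def by simp
  have a: "A powr s = M powr s * (A/M) powr s" using M assms by (simp add: powr_divide)
  have b: "B powr s = M powr s * (B/M) powr s" using M assms by (simp add: powr_divide)
  have "(A/M) powr s + (B/M) powr s \<le> (s*(A/M) + (1-s)) + (s*(B/M) + (1-s))"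
    using young1[of "A/M" s] young1[of "B/M" s] assms M by (intro add_mono) auto
  also have "\<dots> = s*((A+B)/M) + 2*(1-s)" by (simp add: algebra_simps add_divide_distrib)
  also have "(A+B)/M = 2" using False unfolding M_def by (simp add: field_simps)
  also have "s*2 + 2*(1-s) = 2" by simp
  finally have "(A/M) powr s + (B/M) powr s \<le> 2" .
  hence "M powr s * ((A/M) powr s + (B/M) powr s) \<le> M powr s * 2"
    by (intro mult_left_mono) auto
  thus ?thesis unfolding a b M_def by (simp add: algebra_simps)
qed
lemma powsmall: fixes A B s :: real assumes "0 \<le> A" "0 \<le> B" "1 \<le> s"
  shows "A powr s + B powr s \<le> (A+B) powr s"
proof (cases "A + B = 0")
  case True hence "A = 0" "B = 0" using assms by auto
  thus ?thesis using assms by simp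
next
  case False
  define Q where "Q = A+B"
  have Q: "Q > 0" using False assms unfolding Q_def by simp
  have a: "A powr s = Q powr s * (A/Q) powr s" using Q assms by (simp add: powr_divide)
  have b: "B powr s = Q powr s * (B/Q) powr s" using Q assms by (simp add: powr_divide)
  have "(A/Q) powr s \<le> (A/Q) powr 1"
    using assms Q by (intro powr_mono') (auto simp: Q_def)
  moreover have "(B/Q) powr s \<le> (B/Q) powr 1"
    using assms Q by (intro powr_mono') (auto simp: Q_def)
  ultimately have "(A/Q) powr s + (B/Q) powr s \<le> A/Q + B/Q" using assms Q by simp
  also have "\<dots> = (A+B)/Q" by (simp add: add_divide_distrib)
  also have "\<dots> = 1" using Q unfolding Q_def by simp
  finally have "Q powr s * ((A/Q) powr s + (B/Q) powr s) \<le> Q powr s"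
    using mult_left_mono[of _ 1 "Q powr s"] by auto
  thus ?thesis unfolding a b Q_def by (simp add: algebra_simps)
qed
lemma lpr: "lp_norm (ereal r) v = (\<bar>fst v\<bar> powr r + \<bar>snd v\<bar> powr r) powr (1/r)"
  unfolding lp_norm_def by simp

lemma framework:
  fixes T :: "real\<times>real \<Rightarrow> real\<times>real" and q :: ereal and d :: real
  assumes d: "0<d" "d<1"
    and bound: "\<And>x y. lp_norm q (T (x,y)) \<le> sqrt (x^2 + d^2*y^2)"
    and e1: "lp_norm q (T (1,0)) = 1"
  shows "op_norm 2 q T = 1"
    and "lp_norm 2 x1 = 1 \<Longrightarrow> lp_norm q (T x1) = 1 \<Longrightarrow> 1 \<le> lp_norm 2 (x1 - (0,1))"
proof -
  have d2: "d^2 \<le> 1" using d by (simp add: power_le_one)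
  have le: "lp_norm q (T v) \<le> 1" if "lp_norm 2 v = 1" for v
  proof -
    obtain a b where v: "v = (a,b)" by fastforce
    have "a^2 + b^2 = 1" using that unfolding lp2 v by simp
    have "lp_norm q (T v) \<le> sqrt (a^2 + d^2*b^2)" unfolding v by (rule bound)
    also have "\<dots> \<le> sqrt (a^2 + b^2)"
      using mult_right_mono[OF d2, of "b^2"] by simp
    finally show ?thesis using \<open>a^2+b^2=1\<close> by simp
  qed
  show "op_norm 2 q T = 1"
    unfolding op_norm_def
    by (rule cSup_eq_maximum) (use le e1 lp2 in auto)
  assume x1: "lp_norm 2 x1 = 1" "lp_norm q (T x1) = 1"
  obtain a b where v: "x1 = (a,b)" by fastforce
  have ab: "a^2 + b^2 = 1" using x1 unfolding lp2 v by simp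
  have "1 \<le> sqrt (a^2 + d^2*b^2)" using bound[of a b] x1 v by simp
  hence "1 \<le> a^2 + d^2*b^2" by (simp add: real_le_rsqrt)
  hence "(1 - d^2) * b^2 \<le> 0" using ab by (simp add: algebra_simps)
  moreover have "1 - d^2 > 0" using d by (simp add: power_less_one_iff abs_less_iff power2_less_1_iff)
  ultimately have "b^2 \<le> 0" by (simp add: mult_le_0_iff)
  hence "b = 0" by simp
  hence "a^2 = 1" using ab by simp
  have "lp_norm 2 (x1 - (0,1)) = sqrt (a^2 + (b-1)^2)" unfolding lp2 v by simp
  also have "\<dots> = sqrt 2" using \<open>b=0\<close> \<open>a^2=1\<close> by simp
  finally show "1 \<le> lp_norm 2 (x1 - (0,1))" by simp
qed

lemma sq_powr: "\<bar>a::real\<bar> powr r = (a^2) powr (r/2)"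
proof -
  have "(a^2) powr (r/2) = (\<bar>a\<bar> powr 2) powr (r/2)" by (simp only: abs_powr2)
  also have "\<dots> = \<bar>a\<bar> powr r" by (simp only: powr_powr) simp
  finally show ?thesis by simp
qed

lemma finish_root:
  fixes Q r :: real assumes "0 \<le> Q" "0 < r" "S \<le> Q powr (r/2)" "0 \<le> S"
  shows "S powr (1/r) \<le> sqrt Q"
proof -
  have "S powr (1/r) \<le> (Q powr (r/2)) powr (1/r)"
    using assms by (intro powr_mono2) auto
  also have "\<dots> = Q powr (1/2)" using assms by (simp add: powr_powr)
  also have "\<dots> = sqrt Q" using assms by (simp add: powr_half_sqrt)
  finally show ?thesis .
qed

lemma case_inf:
  assumes "0 < d" "d < 1"
  shows "\<exists>T. linear T \<and> (\<forall>x y. lp_norm \<infinity> (T (x,y)) \<le> sqrt (x^2 + d^2*y^2))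
     \<and> lp_norm \<infinity> (T (1,0)) = 1 \<and> lp_norm \<infinity> (T (0,1)) = d"
proof (intro exI conjI allI)
  let ?T = "\<lambda>v::real\<times>real. (fst v, d * snd v)"
  show "linear ?T" by (rule linearI) (auto simp: algebra_simps)
  fix x y :: real
  have "\<bar>x\<bar> \<le> sqrt (x^2 + d^2*y^2)" using real_sqrt_le_mono[of "x^2" "x^2 + d^2*y^2"] by simp
  moreover have "\<bar>d*y\<bar> \<le> sqrt (x^2 + d^2*y^2)"
  proof -
    have "\<bar>d*y\<bar> = sqrt ((d*y)^2)" by (rule real_sqrt_abs[symmetric])
    also have "\<dots> \<le> sqrt (x^2 + d^2*y^2)" by (rule real_sqrt_le_mono) (simp add: power_mult_distrib)
    finally show ?thesis .
  qed
  ultimately show "lp_norm \<infinity> (?T (x,y)) \<le> sqrt (x^2 + d^2*y^2)" unfolding lp_norm_def by simp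
qed (use assms in \<open>auto simp: lp_norm_def\<close>)

lemma case_big:
  assumes "0 < d" "d < 1" "2 \<le> r"
  shows "\<exists>T. linear T \<and> (\<forall>x y. lp_norm (ereal r) (T (x,y)) \<le> sqrt (x^2 + d^2*y^2))
     \<and> lp_norm (ereal r) (T (1,0)) = 1 \<and> lp_norm (ereal r) (T (0,1)) = d"
proof (intro exI conjI allI)
  let ?T = "\<lambda>v::real\<times>real. (fst v, d * snd v)"
  show "linear ?T" by (rule linearI) (auto simp: algebra_simps)
  fix x y :: real
  have "\<bar>x\<bar> powr r + \<bar>d*y\<bar> powr r = (x^2) powr (r/2) + ((d*y)^2) powr (r/2)"
    by (simp add: sq_powr)
  also have "\<dots> \<le> (x^2 + (d*y)^2) powr (r/2)" using assms by (intro powsmall) auto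
  finally have "\<bar>x\<bar> powr r + \<bar>d*y\<bar> powr r \<le> (x^2 + d^2*y^2) powr (r/2)"
    by (simp add: power_mult_distrib)
  thus "lp_norm (ereal r) (?T (x,y)) \<le> sqrt (x^2 + d^2*y^2)" unfolding lpr
    using assms by (intro finish_root) auto
next
  show "lp_norm (ereal r) (fst (1::real,0::real), d * snd (1::real,0::real)) = 1"
    unfolding lpr using assms by simp
  have "(d powr r) powr (1/r) = d" using assms by (simp add: powr_powr)
  thus "lp_norm (ereal r) (fst (0::real,1::real), d * snd (0::real,1::real)) = d"
    unfolding lpr using assms by simp
qed

lemma case_small:
  assumes "0 < d" "d < 1" "1 \<le> r" "r < 2"
  shows "\<exists>T. linear T \<and> (\<forall>x y. lp_norm (ereal r) (T (x,y)) \<le> sqrt (x^2 + d^2*y^2))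
     \<and> lp_norm (ereal r) (T (1,0)) = 1 \<and> lp_norm (ereal r) (T (0,1)) = d"
proof -
  define c where "c = 2 powr (1/r)"
  have c: "c > 0" "c powr r = 2" using assms unfolding c_def by (auto simp: powr_powr)
  have dv: "\<bar>a / c\<bar> powr r = \<bar>a\<bar> powr r / 2" for a
    using c by (simp add: powr_divide)
  let ?T = "\<lambda>v::real\<times>real. ((fst v + d * snd v)/c, (fst v - d * snd v)/c)"
  have lin: "linear ?T" by (rule linearI) (auto simp: algebra_simps add_divide_distrib diff_divide_distrib)
  have bd: "lp_norm (ereal r) (?T (x,y)) \<le> sqrt (x^2 + d^2*y^2)" for x y
  proof -
    have "\<bar>(x+d*y)/c\<bar> powr r + \<bar>(x-d*y)/c\<bar> powr r
        = ((((x+d*y))^2) powr (r/2) + ((x-d*y)^2) powr (r/2)) / 2"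
      unfolding dv by (simp only: sq_powr add_divide_distrib)
    also have "\<dots> \<le> (2 * ((((x+d*y))^2 + (x-d*y)^2)/2) powr (r/2)) / 2"
      using assms by (intro divide_right_mono powmean) auto
    also have "(2 * ((((x+d*y))^2 + (x-d*y)^2)/2) powr (r/2)) / 2 = (x^2 + d^2*y^2) powr (r/2)"
    proof -
      have "(((x+d*y))^2 + (x-d*y)^2)/2 = x^2 + d^2*y^2"
        by (simp add: power2_eq_square algebra_simps)
      show ?thesis unfolding \<open>(((x+d*y))^2 + (x-d*y)^2)/2 = x^2 + d^2*y^2\<close> by simp
    qed
    finally have H: "\<bar>(x+d*y)/c\<bar> powr r + \<bar>(x-d*y)/c\<bar> powr r \<le> (x^2 + d^2*y^2) powr (r/2)" .
    have "lp_norm (ereal r) (?T (x,y)) = (\<bar>(x+d*y)/c\<bar> powr r + \<bar>(x-d*y)/c\<bar> powr r) powr (1/r)"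
      unfolding lpr by simp
    also have "\<dots> \<le> sqrt (x^2 + d^2*y^2)" using assms H by (intro finish_root) auto
    finally show ?thesis .
  qed
  have t1: "?T (1,0) = (1/c, 1/c)" by simp
  have e1: "lp_norm (ereal r) (?T (1,0)) = 1"
    unfolding t1 lpr fst_conv snd_conv dv by simp
  have t2: "?T (0,1) = (d/c, (-d)/c)" by simp
  have "lp_norm (ereal r) (?T (0,1)) = (\<bar>d\<bar> powr r / 2 + \<bar>-d\<bar> powr r / 2) powr (1/r)"
    unfolding t2 lpr fst_conv snd_conv dv by simp
  also have "\<dots> = (d powr r) powr (1/r)" using assms by simp
  also have "\<dots> = d" using assms by (simp add: powr_powr)
  finally have e2: "lp_norm (ereal r) (?T (0,1)) = d" .
  show ?thesis
    apply (rule exI[of _ ?T])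
    apply (intro conjI allI)
       apply (rule lin)
      apply (rule bd)
     apply (rule e1)
    apply (rule e2)
    done
qed

theorem mainTheorem10:
  fixes q :: ereal
  assumes "1 \<le> q"
  shows "\<not> uniform_sBPBp 2 q"
proof
  assume U: "uniform_sBPBp 2 q"
  then obtain \<eta> where \<eta>: "\<eta> > 0" and H: "\<forall>T x0. linear T \<and> op_norm 2 q T = 1 \<and> lp_norm 2 x0 = 1
        \<and> lp_norm q (T x0) > 1 - \<eta> \<longrightarrow>
        (\<exists>x1. lp_norm 2 x1 = 1 \<and> lp_norm q (T x1) = 1 \<and> lp_norm 2 (x1 - x0) < 1)"
    unfolding uniform_sBPBp_def by (meson zero_less_one)
  define d where "d = max (1/2) (1 - \<eta>/2)"
  have d: "0 < d" "d < 1" "1 - \<eta> < d" using \<eta> unfolding d_def by auto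
  have "\<exists>T. linear T \<and> (\<forall>x y. lp_norm q (T (x,y)) \<le> sqrt (x^2 + d^2*y^2))
     \<and> lp_norm q (T (1,0)) = 1 \<and> lp_norm q (T (0,1)) = d"
  proof (cases q)
    case (real r)
    hence r: "1 \<le> r" using assms by simp
    show ?thesis
    proof (cases "2 \<le> r")
      case True thus ?thesis using case_big[OF d(1,2) True] real by simp
    next
      case False thus ?thesis using case_small[OF d(1,2) r] real by simp
    qed
  next
    case PInf thus ?thesis using case_inf[OF d(1,2)] by simp
  next
    case MInf thus ?thesis using assms by simp
  qed
  then obtain T where T: "linear T" "\<And>x y. lp_norm q (T (x,y)) \<le> sqrt (x^2 + d^2*y^2)"
    "lp_norm q (T (1,0)) = 1" "lp_norm q (T (0,1)) = d" by blast
  have op: "op_norm 2 q T = 1" by (rule framework(1)[OF d(1,2) T(2,3)])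
  have x0: "lp_norm 2 ((0::real),(1::real)) = 1" unfolding lp2 by simp
  have "lp_norm q (T (0,1)) > 1 - \<eta>" using T(4) d by simp
  then obtain x1 where x1: "lp_norm 2 x1 = 1" "lp_norm q (T x1) = 1" "lp_norm 2 (x1 - (0,1)) < 1"
    using H T(1) op x0 by blast
  have "1 \<le> lp_norm 2 (x1 - (0,1))" by (rule framework(2)[OF d(1,2) T(2,3) x1(1,2)])
  thus False using x1(3) by simp
qed

end
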